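(* There exist absolute constants $c, C > 0$ and $m_0$ such that the following holds for every integer $m \geq m_0$. Let $s = \lceil \log_2 m \rceil + 2$, $k = m^2 s$, $n = km$, and let $\mathcal{F} \subset \mathcal{P}([n])$ be constructed as follows: partition $[n]$ into blocks $B_1,\ldots,B_m$ with $|B_i| = k$, choose $T_i \subset B_i$ with $|T_i| = s$, put $T = \bigcup_i T_i$, and let $\mathcal{F}$ be the union-closed family generated by $\{B_i \cup \{t\} : i \in [m],\ t \in T\}$. Let $\mathcal{F}' = \mathcal{F} \cup \{[n]\setminus\{j\} : j \in [n]\}$. Then $\mathcal{F}'$ is union-closed, $\mathcal{F}'$ separates the points of $[n]$, and $$c\,\frac{\log_2\log_2|\mathcal{F}'|}{\log_2|\mathcal{F}'|} \leq \mathrm{AOD}(\mathcal{F}') \leq C\,\frac{\log_2\log_2|\mathcal{F}'|}{\log_2|\mathcal{F}'|}.$$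
   Context: $[n] = \{1,\ldots,n\}$. A family of sets is union-closed if it contains the union of any two of its members; the union-closed family generated by $\mathcal{G}$ is the smallest union-closed family containing $\mathcal{G}$. A family $\mathcal{F} \subset \mathcal{P}([n])$ separates the points of $[n]$ if for all $i \neq j$ in $[n]$ there is $A \in \mathcal{F}$ with $|A \cap \{i,j\}| = 1$. For a finite nonempty family $\mathcal{F} \subset \mathcal{P}(X)$ and $x \in X$, the abundance is $\gamma_x = |\{A \in \mathcal{F} : x \in A\}|/|\mathcal{F}|$. For $\mathcal{F} \neq \emptyset,\{\emptyset\}$, the average overlap density is $\mathrm{AOD}(\mathcal{F}) = \frac{1}{|\mathcal{F}\setminus\{\emptyset\}|}\sum_{A \in \mathcal{F}\setminus\{\emptyset\}} \frac{1}{|A|}\sum_{x \in A}\gamma_x$. *)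

theory Defs
  imports Complex_Main
begin

definition union_closed :: "'a set set \<Rightarrow> bool" where
  "union_closed F \<longleftrightarrow> (\<forall>A\<in>F. \<forall>B\<in>F. A \<union> B \<in> F)"

definition uc_generated :: "'a set set \<Rightarrow> 'a set set" where
  "uc_generated G = \<Inter>{H. G \<subseteq> H \<and> union_closed H}"

definition separates_points :: "nat \<Rightarrow> nat set set \<Rightarrow> bool" where
  "separates_points n F \<longleftrightarrow>
     (\<forall>i\<in>{1..n}. \<forall>j\<in>{1..n}. i \<noteq> j \<longrightarrow> (\<exists>A\<in>F. card (A \<inter> {i, j}) = 1))"

definition abundance :: "'a set set \<Rightarrow> 'a \<Rightarrow> real" where
  "abundance F x = real (card {A\<in>F. x \<in> A}) / real (card F)"

definition AOD :: "'a set set \<Rightarrow> real" where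
  "AOD F = (1 / real (card (F - {{}}))) *
     (\<Sum>A\<in>F - {{}}. (1 / real (card A)) * (\<Sum>x\<in>A. abundance F x))"

end

theory Submission
  imports Defs "HOL-Library.FuncSet"
begin

lemma ucg_closed: "union_closed (uc_generated G)"
  unfolding union_closed_def uc_generated_def by blast

lemma ucg_sub: "G \<subseteq> uc_generated G"
  unfolding uc_generated_def by blast

lemma ucg_least: "G \<subseteq> H \<Longrightarrow> union_closed H \<Longrightarrow> uc_generated G \<subseteq> H"
  unfolding uc_generated_def by blast

lemma uc_Union: assumes "union_closed H" "finite X" "X \<noteq> {}" "X \<subseteq> H" shows "\<Union>X \<in> H"
  using assms(2,3,4)
proof (induction X rule: finite_ne_induct)
  case (singleton x) then show ?case by simp
next
  case (insert x X) then show ?case using assms(1) unfolding union_closed_def by simp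
qed

lemma pow_ineq: "(x+1::nat)^(Suc m) \<ge> x^(Suc m) + Suc m * x^m"
proof (induction m)
  case 0 then show ?case by simp
next
  case (Suc m)
  have "(x+1)^(Suc (Suc m)) = (x+1) * (x+1)^(Suc m)" by simp
  also have "\<dots> \<ge> (x+1) * (x^(Suc m) + Suc m * x^m)" using Suc by (intro mult_le_mono2)
  finally show ?case by (simp add: algebra_simps)
qed

lemma exp_grow: "6 \<le> m \<Longrightarrow> 8 * m < (2::nat)^m"
proof (induction m rule: nat_induct_at_least)
  case base then show ?case by simp
next
  case (Suc m) then show ?case by simp
qed

locale cons =
  fixes m s k n :: nat and B T :: "nat \<Rightarrow> nat set" and TT :: "nat set" and F F' :: "nat set set"
  assumes m0: "m \<ge> 64"
  and s_def: "s = nat \<lceil>log 2 (real m)\<rceil> + 2"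
  and k_def: "k = m^2*s" and n_def: "n = k*m"
  and Bcover: "(\<Union>i\<in>{1..m}. B i) = {1..n}"
  and Bdisj: "\<forall>i\<in>{1..m}. \<forall>j\<in>{1..m}. i \<noteq> j \<longrightarrow> B i \<inter> B j = {}"
  and Bcard: "\<forall>i\<in>{1..m}. card (B i) = k"
  and Tsub: "\<forall>i\<in>{1..m}. T i \<subseteq> B i \<and> card (T i) = s"
  and TT_def: "TT = (\<Union>i\<in>{1..m}. T i)"
  and F_def: "F = uc_generated {B i \<union> {t} | i t. i \<in> {1..m} \<and> t \<in> TT}"
  and F'_def: "F' = F \<union> {{1..n} - {j} | j. j \<in> {1..n}}"
begin

lemma s_bounds: "4*m \<le> 2^s" "2^s \<le> 8*m"
proof -
  define x where "x = log 2 (real m)"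
  have x0: "x \<ge> 0" using m0 by (simp add: x_def)
  have c0: "\<lceil>x\<rceil> \<ge> 0" using x0 by simp
  have e: "real (2^(nat \<lceil>x\<rceil>)) = 2 powr (real_of_int \<lceil>x\<rceil>)"
    using c0 by (simp add: powr_realpow[symmetric])
  have "2 powr (real_of_int \<lceil>x\<rceil>) \<ge> 2 powr x" by simp
  moreover have "2 powr x = real m" using m0 by (simp add: x_def)
  moreover have "2 powr (real_of_int \<lceil>x\<rceil>) < 2 powr (x+1)" using ceiling_correct[of x] by simp
  moreover have "2 powr (x+1) = 2 * real m" using m0 by (simp add: x_def powr_add)
  ultimately have a: "real m \<le> real (2^(nat \<lceil>x\<rceil>))" "real (2^(nat \<lceil>x\<rceil>)) < 2 * real m"
    using e by auto
  have s2: "(2::nat)^s = 4 * 2^(nat \<lceil>x\<rceil>)" by (simp add: s_def x_def power_add)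
  from a have "m \<le> 2^(nat \<lceil>x\<rceil>)" "2^(nat \<lceil>x\<rceil>) < 2*m" by linarith+
  then show "4*m \<le> 2^s" "2^s \<le> 8*m" using s2 by auto
qed

lemma s_ge2: "s \<ge> 2" using s_def by simp

lemma s_le: "s + 1 \<le> m"
proof (rule ccontr)
  assume "\<not> ?thesis"
  then have "m \<le> s" by simp
  then have "(2::nat)^m \<le> 2^s" by (simp add: power_increasing)
  moreover have "8*m < 2^m" using exp_grow m0 by simp
  ultimately show False using s_bounds by linarith
qed


definition "CC i = insert (B i) (Pow (T i))"
definition "P = PiE {1..m} CC"
definition "Q = PiE {1..m} (\<lambda>i. Pow (T i))"
definition "Phi f = (\<Union>i\<in>{1..m}. f i)"
definition "PP i = PiE {1..m} (\<lambda>j. if j = i then {B i} else CC j)"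

lemma k_gt: "k > s" "k > 0"
proof -
  have "(64::nat)^2 \<le> m^2" using power_mono[OF m0, of 2] by simp
  then have "m^2 \<ge> 2" by simp
  then have "2 * s \<le> m^2 * s" by (intro mult_le_mono1)
  moreover have "s < 2 * s" using s_ge2 by simp
  ultimately show "k > s" using k_def by linarith
  then show "k > 0" by simp
qed

lemma finB: "i \<in> {1..m} \<Longrightarrow> finite (B i)"
  using Bcard k_gt card_ge_0_finite by metis

lemma Bsub: "i \<in> {1..m} \<Longrightarrow> B i \<subseteq> {1..n}"
  using Bcover by blast

lemma TB: "i \<in> {1..m} \<Longrightarrow> T i \<subseteq> B i" using Tsub by blast
lemma cardT: "i \<in> {1..m} \<Longrightarrow> card (T i) = s" using Tsub by blast
lemma finT: "i \<in> {1..m} \<Longrightarrow> finite (T i)" using TB finB finite_subset by blast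
lemma Tne: "i \<in> {1..m} \<Longrightarrow> T i \<noteq> {}" using cardT s_ge2 by fastforce

lemma BnotT: "i \<in> {1..m} \<Longrightarrow> \<not> B i \<subseteq> T i"
proof
  assume i: "i \<in> {1..m}" and "B i \<subseteq> T i"
  then have "card (B i) \<le> card (T i)" using finT card_mono by blast
  then show False using i Bcard cardT k_gt by fastforce
qed

lemma finTT: "finite TT" using finT TT_def by auto

lemma cardCC: "i \<in> {1..m} \<Longrightarrow> card (CC i) = 2^s + 1"
  using BnotT finT cardT by (simp add: CC_def card_Pow)

lemma cardP: "card P = (2^s+1)^m"
proof -
  have "card P = (\<Prod>i\<in>{1..m}. card (CC i))" by (simp add: P_def card_PiE)
  also have "\<dots> = (\<Prod>i\<in>{1..m}. 2^s+1)" using cardCC by (intro prod.cong) auto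
  finally show ?thesis by simp
qed

lemma cardQ: "card Q = (2^s)^m"
proof -
  have "card Q = (\<Prod>i\<in>{1..m}. card (Pow (T i)))" by (simp add: Q_def card_PiE)
  also have "\<dots> = (\<Prod>i\<in>{1..m}. 2^s)" using finT cardT by (intro prod.cong) (auto simp: card_Pow)
  finally show ?thesis by simp
qed

lemma finP: "finite P"
  unfolding P_def CC_def using finT by (intro finite_PiE) auto

lemma QP: "Q \<subseteq> P" unfolding Q_def P_def CC_def by (intro PiE_mono) auto

lemma P_CC: "f \<in> P \<Longrightarrow> j \<in> {1..m} \<Longrightarrow> f j \<in> CC j"
  unfolding P_def by (auto simp: PiE_iff)

lemma P_sub: assumes "f \<in> P" "j \<in> {1..m}" shows "f j \<subseteq> B j"
  using P_CC[OF assms] TB[OF assms(2)] unfolding CC_def by auto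

lemma Phi_inter: assumes "f \<in> P" "i \<in> {1..m}" shows "Phi f \<inter> B i = f i"
proof
  show "Phi f \<inter> B i \<subseteq> f i"
  proof
    fix x assume "x \<in> Phi f \<inter> B i"
    then obtain j where j: "j \<in> {1..m}" "x \<in> f j" "x \<in> B i" unfolding Phi_def by auto
    then have "x \<in> B j" using P_sub assms by blast
    then have "j = i" using Bdisj j assms by blast
    then show "x \<in> f i" using j by simp
  qed
  show "f i \<subseteq> Phi f \<inter> B i" using P_sub[OF assms] assms unfolding Phi_def by auto
qed

lemma Phi_inj: "inj_on Phi P"
proof (rule inj_onI)
  fix f g assume f: "f \<in> P" and g: "g \<in> P" and e: "Phi f = Phi g"
  show "f = g"
  proof (rule PiE_ext)
    show "f \<in> PiE {1..m} CC" "g \<in> PiE {1..m} CC" using f g by (auto simp: P_def)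
    fix i assume "i \<in> {1..m}"
    then show "f i = g i" using Phi_inter[OF f] Phi_inter[OF g] e by metis
  qed
qed

lemma PQ_char: "f \<in> P - Q \<longleftrightarrow> f \<in> P \<and> (\<exists>i\<in>{1..m}. f i = B i)"
proof
  assume "f \<in> P - Q"
  then have fP: "f \<in> P" and "f \<notin> Q" by auto
  have ext: "f \<in> extensional {1..m}" using fP by (simp add: P_def PiE_iff)
  have "\<not> (\<forall>i\<in>{1..m}. f i \<in> Pow (T i))" using \<open>f \<notin> Q\<close> ext unfolding Q_def by (simp add: PiE_iff)
  then obtain i where i: "i \<in> {1..m}" "f i \<notin> Pow (T i)" by blast
  then have "f i = B i" using P_CC[OF fP i(1)] by (simp add: CC_def)
  then show "f \<in> P \<and> (\<exists>i\<in>{1..m}. f i = B i)" using fP i by blast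
next
  assume a: "f \<in> P \<and> (\<exists>i\<in>{1..m}. f i = B i)"
  then obtain i where i: "i \<in> {1..m}" "f i = B i" by blast
  have "f \<notin> Q"
  proof
    assume "f \<in> Q"
    then have "f i \<in> Pow (T i)" using i(1) unfolding Q_def by (rule PiE_mem)
    then show False using BnotT[OF i(1)] i by simp
  qed
  then show "f \<in> P - Q" using a by blast
qed


definition "G0 = {B i \<union> {t} | i t. i \<in> {1..m} \<and> t \<in> TT}"

lemma F_G0: "F = uc_generated G0" by (simp add: F_def G0_def)

lemma Phi_union: "Phi (\<lambda>i\<in>{1..m}. f i \<union> g i) = Phi f \<union> Phi g"
  unfolding Phi_def by auto

lemma F_sub: "F \<subseteq> Phi ` (P - Q)"
  unfolding F_G0
proof (rule ucg_least)
  show "union_closed (Phi ` (P - Q))"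
    unfolding union_closed_def
  proof (intro ballI)
    fix X Y assume "X \<in> Phi ` (P - Q)" "Y \<in> Phi ` (P - Q)"
    then obtain f g where f0: "f \<in> P - Q" "X = Phi f"
      and g0: "g \<in> P - Q" "Y = Phi g" by blast
    then have f: "f \<in> P" "\<exists>i\<in>{1..m}. f i = B i" "X = Phi f"
      and g: "g \<in> P" "Y = Phi g" using PQ_char by auto
    define h where "h = (\<lambda>i\<in>{1..m}. f i \<union> g i)"
    have "h \<in> P" unfolding P_def PiE_iff
    proof (intro conjI ballI)
      fix i assume i: "i \<in> {1..m}"
      have "f i \<in> CC i" "g i \<in> CC i" using P_CC f g i by auto
      then show "h i \<in> CC i" using i TB[OF i] unfolding h_def CC_def by auto
    qed (simp add: h_def)
    moreover have "\<exists>i\<in>{1..m}. h i = B i"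
    proof -
      obtain i where i: "i \<in> {1..m}" "f i = B i" using f(2) by blast
      then have "h i = B i" using P_sub[OF g(1) i(1)] unfolding h_def by auto
      then show ?thesis using i by blast
    qed
    ultimately have "h \<in> P - Q" using PQ_char by blast
    moreover have "X \<union> Y = Phi h" using f(3) g(2) Phi_union[of f g] unfolding h_def by simp
    ultimately show "X \<union> Y \<in> Phi ` (P - Q)" by blast
  qed
  show "G0 \<subseteq> Phi ` (P - Q)"
  proof
    fix X assume "X \<in> G0"
    then obtain i t where i: "i \<in> {1..m}" and t: "t \<in> TT" and X: "X = B i \<union> {t}"
      unfolding G0_def by auto
    obtain j where j: "j \<in> {1..m}" "t \<in> T j" using t TT_def by auto
    define f where "f = (\<lambda>l\<in>{1..m}. if l = i then B i else if l = j then {t} else {})"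
    have "f \<in> P" unfolding P_def PiE_iff
    proof (intro conjI ballI)
      fix l assume "l \<in> {1..m}"
      then show "f l \<in> CC l" using j unfolding f_def CC_def by auto
    qed (simp add: f_def)
    moreover have "f i = B i" using i by (simp add: f_def)
    ultimately have "f \<in> P - Q" using PQ_char i by blast
    moreover have "Phi f = X"
    proof -
      have "t \<in> B j" using TB[OF j(1)] j by auto
      show ?thesis
      proof (cases "j = i")
        case True
        then have "t \<in> B i" using TB[OF j(1)] j by auto
        then show ?thesis using i True unfolding X Phi_def f_def by auto
      next
        case False
        then show ?thesis using i j unfolding X Phi_def f_def by auto
      qed
    qed
    ultimately show "X \<in> Phi ` (P - Q)" by blast
  qed
qed

lemma sub_F: "Phi ` (P - Q) \<subseteq> F"
proof
  fix X assume "X \<in> Phi ` (P - Q)"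
  then obtain f where f0: "f \<in> P - Q" and X: "X = Phi f" by blast
  then obtain i0 where fP: "f \<in> P" and i0: "i0 \<in> {1..m}" "f i0 = B i0"
    using PQ_char by auto
  define Y where "Y = {B j \<union> {t} | j t. j \<in> {1..m} \<and> f j = B j \<and> t \<in> TT \<and> t \<in> Phi f}"
  have "Y \<subseteq> (\<lambda>(j,t). B j \<union> {t}) ` ({1..m} \<times> TT)" unfolding Y_def by auto
  then have finY: "finite Y" using finTT by (meson finite_SigmaI finite_atLeastAtMost finite_imageI finite_subset)
  obtain t0 where t0: "t0 \<in> T i0" using Tne[OF i0(1)] by blast
  have t0TT: "t0 \<in> TT" using t0 i0 TT_def by auto
  have t0P: "t0 \<in> Phi f" using t0 TB[OF i0(1)] i0 unfolding Phi_def by blast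
  have "B i0 \<union> {t0} \<in> Y" unfolding Y_def using i0 t0TT t0P by blast
  then have neY: "Y \<noteq> {}" by blast
  have YG: "Y \<subseteq> G0" unfolding Y_def G0_def by blast
  have "\<Union>Y = Phi f"
  proof
    show "\<Union>Y \<subseteq> Phi f"
    proof
      fix x assume "x \<in> \<Union>Y"
      then obtain j t where "j \<in> {1..m}" "f j = B j" "t \<in> Phi f" "x \<in> B j \<union> {t}"
        unfolding Y_def by blast
      then show "x \<in> Phi f" unfolding Phi_def by auto
    qed
    show "Phi f \<subseteq> \<Union>Y"
    proof
      fix x assume x: "x \<in> Phi f"
      then obtain l where l: "l \<in> {1..m}" "x \<in> f l" unfolding Phi_def by auto
      show "x \<in> \<Union>Y"
      proof (cases "f l = B l")
        case True
        obtain t where t: "t \<in> T l" using Tne[OF l(1)] by blast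
        have "t \<in> TT" using t l TT_def by auto
        moreover have "t \<in> Phi f" using t TB[OF l(1)] True l unfolding Phi_def by blast
        ultimately have "B l \<union> {t} \<in> Y" unfolding Y_def using l True by blast
        then show ?thesis using l True by blast
      next
        case False
        then have "f l \<subseteq> T l" using P_CC[OF fP l(1)] unfolding CC_def by auto
        then have "x \<in> TT" using l TT_def by auto
        then have "B i0 \<union> {x} \<in> Y" unfolding Y_def using i0 x by blast
        then show ?thesis by blast
      qed
    qed
  qed
  moreover have "\<Union>Y \<in> F" unfolding F_G0
    using uc_Union[OF ucg_closed finY neY] YG ucg_sub by blast
  ultimately show "X \<in> F" using X by simp
qed

lemma F_eq: "F = Phi ` (P - Q)" using F_sub sub_F by blast

lemma cardF: "card F = (2^s+1)^m - (2^s)^m"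
proof -
  have "card F = card (P - Q)" unfolding F_eq
    by (rule card_image) (meson Diff_subset Phi_inj inj_on_subset)
  also have "\<dots> = card P - card Q" using QP finP by (meson card_Diff_subset finite_subset)
  finally show ?thesis using cardP cardQ by simp
qed


lemma PP_P: assumes i: "i \<in> {1..m}" shows "PP i \<subseteq> P - Q"
proof
  fix f assume f: "f \<in> PP i"
  have "f \<in> P" unfolding P_def PiE_iff
  proof (intro conjI ballI)
    fix j assume j: "j \<in> {1..m}"
    have "f j \<in> (if j = i then {B i} else CC j)" using f j unfolding PP_def by (rule PiE_mem)
    then show "f j \<in> CC j" by (auto simp: CC_def split: if_splits)
  next
    show "f \<in> extensional {1..m}" using f unfolding PP_def by (simp add: PiE_iff)
  qed
  moreover have "f i = B i" using PiE_mem[OF f[unfolded PP_def] i] by simp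
  ultimately show "f \<in> P - Q" using PQ_char i by blast
qed

lemma cardPP: assumes i: "i \<in> {1..m}" shows "card (PP i) = (2^s+1)^(m-1)"
proof -
  have "card (PP i) = (\<Prod>j\<in>{1..m}. card (if j = i then {B i} else CC j))" by (simp add: PP_def card_PiE)
  also have "\<dots> = card (if i = i then {B i} else CC i) * (\<Prod>j\<in>{1..m} - {i}. card (if j = i then {B i} else CC j))"
    using i by (simp add: prod.remove)
  also have "(\<Prod>j\<in>{1..m} - {i}. card (if j = i then {B i} else CC j)) = (\<Prod>j\<in>{1..m} - {i}. 2^s+1)"
    using cardCC by (intro prod.cong) auto
  also have "\<dots> = (2^s+1)^(m-1)" using i by simp
  finally show ?thesis by simp
qed

lemma PP_mem: assumes "i \<in> {1..m}" "f \<in> PP i" "x \<in> B i" shows "x \<in> Phi f"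
  using PiE_mem[OF assms(2)[unfolded PP_def] assms(1)] assms unfolding Phi_def by auto

lemma finF: "finite F" using F_eq finP by simp

lemma F_sub_n: "A \<in> F \<Longrightarrow> A \<subseteq> {1..n}"
  using F_eq P_sub Bsub unfolding Phi_def by blast

lemma F_big: assumes "A \<in> F" shows "k \<le> card A"
proof -
  obtain f where f0: "f \<in> P - Q" and A: "A = Phi f" using assms F_eq by auto
  then obtain i where f: "f \<in> P" and i: "i \<in> {1..m}" "f i = B i"
    using PQ_char by auto
  have "B i \<subseteq> A" using A i unfolding Phi_def by auto
  moreover have "finite A" using F_sub_n assms finite_subset by blast
  ultimately show ?thesis using card_mono Bcard i by fastforce
qed

lemma abund_count_lower: assumes i: "i \<in> {1..m}" and x: "x \<in> B i"
  shows "(2^s+1)^(m-1) \<le> card {A\<in>F'. x \<in> A}"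
proof -
  have "card (PP i) = card (Phi ` PP i)"
    using Phi_inj PP_P[OF i] by (metis Diff_subset card_image inj_on_subset)
  moreover have "Phi ` PP i \<subseteq> {A\<in>F'. x \<in> A}"
    using PP_P[OF i] PP_mem[OF i _ x] F_eq F'_def by blast
  moreover have "finite F'" using finF F'_def by simp
  ultimately have "card (PP i) \<le> card {A\<in>F'. x \<in> A}" by (metis (no_types, lifting) card_mono finite_subset mem_Collect_eq subsetI)
  then show ?thesis using cardPP[OF i] by simp
qed

definition "CS = {{1..n} - {j} | j. j \<in> {1..n}}"

lemma CS_img: "CS = (\<lambda>j. {1..n} - {j}) ` {1..n}" unfolding CS_def by blast

lemma cardCS: "card CS \<le> n" unfolding CS_img using card_image_le[of "{1..n}"] by simp

lemma F'_eq: "F' = F \<union> CS" unfolding CS_def by (rule F'_def)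

lemma finF': "finite F'" unfolding F'_eq CS_img using finF by blast

lemma cardF'_le: "card F' \<le> card F + n"
  using F'_eq card_Un_le[of F CS] cardCS by simp

lemma cardF'_ge: "card F \<le> card F'"
  using F'_eq finF' by (simp add: card_mono)

lemma abund_count_upper: assumes i: "i \<in> {1..m}" and x: "x \<in> B i" and xT: "x \<notin> TT"
  shows "card {A\<in>F'. x \<in> A} \<le> (2^s+1)^(m-1) + n"
proof -
  have "{A\<in>F. x \<in> A} \<subseteq> Phi ` PP i"
  proof
    fix A assume "A \<in> {A\<in>F. x \<in> A}"
    then obtain f where f: "f \<in> P" and A: "A = Phi f" and xA: "x \<in> A" using F_eq by auto
    then obtain j where j: "j \<in> {1..m}" "x \<in> f j" unfolding Phi_def by auto
    have "x \<in> B j" using P_sub[OF f j(1)] j by auto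
    then have ji: "j = i" using Bdisj i j x by blast
    have "f i = B i"
    proof (rule ccontr)
      assume "f i \<noteq> B i"
      then have "f i \<subseteq> T i" using P_CC[OF f i] unfolding CC_def by auto
      then show False using j ji xT i TT_def by auto
    qed
    have "f \<in> PP i" unfolding PP_def PiE_iff
    proof (intro conjI ballI)
      fix l assume l: "l \<in> {1..m}"
      show "f l \<in> (if l = i then {B i} else CC l)" using \<open>f i = B i\<close> P_CC[OF f l] by auto
    next
      show "f \<in> extensional {1..m}" using f unfolding P_def by (simp add: PiE_iff)
    qed
    then show "A \<in> Phi ` PP i" using A by blast
  qed
  moreover have fPP: "finite (PP i)" using PP_P[OF i] finP finite_subset by blast
  ultimately have "card {A\<in>F. x \<in> A} \<le> card (Phi ` PP i)" by (intro card_mono) auto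
  also have "\<dots> \<le> card (PP i)" using fPP by (rule card_image_le)
  finally have c1: "card {A\<in>F. x \<in> A} \<le> card (PP i)" .
  moreover have "{A\<in>F'. x \<in> A} \<subseteq> {A\<in>F. x \<in> A} \<union> CS" using F'_eq by auto
  moreover have "finite CS" using CS_img by simp
  ultimately have "card {A\<in>F'. x \<in> A} \<le> card ({A\<in>F. x \<in> A} \<union> CS)"
    using finF by (intro card_mono) auto
  also have "\<dots> \<le> card {A\<in>F. x \<in> A} + card CS" by (rule card_Un_le)
  finally have "card {A\<in>F'. x \<in> A} \<le> card (PP i) + card CS" using c1 by linarith
  then show ?thesis using cardPP[OF i] cardCS by simp
qed


lemma F'_sub: "A \<in> F' \<Longrightarrow> A \<subseteq> {1..n}"
  using F_sub_n unfolding F'_eq CS_def by blast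

lemma n_ge: "n \<ge> 2 * k" using n_def m0 by simp

lemma F'_big: assumes "A \<in> F'" shows "k \<le> card A"
proof (cases "A \<in> F")
  case True then show ?thesis using F_big by blast
next
  case False
  then obtain j where j: "j \<in> {1..n}" "A = {1..n} - {j}" using assms unfolding F'_eq CS_def by blast
  then have "card A = n - 1" by simp
  then show ?thesis using n_ge k_gt by linarith
qed

lemma F'_ne: "A \<in> F' \<Longrightarrow> A \<noteq> {}" using F'_big k_gt by fastforce

lemma full_F: "{1..n} \<in> F"
proof -
  define f where "f = (\<lambda>i\<in>{1..m}. B i)"
  have "f \<in> P" unfolding P_def CC_def f_def by auto
  moreover have "f 1 = B 1" "(1::nat) \<in> {1..m}" using m0 by (auto simp: f_def)
  ultimately have "f \<in> P - Q" using PQ_char by blast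
  moreover have "Phi f = {1..n}" unfolding Phi_def f_def using Bcover by simp
  ultimately show ?thesis using F_eq by blast
qed

lemma uc_F': "union_closed F'"
  unfolding union_closed_def
proof (intro ballI)
  have ucF: "union_closed F" unfolding F_G0 by (rule ucg_closed)
  have key: "X \<union> ({1..n} - {j}) \<in> F'" if "X \<subseteq> {1..n}" "j \<in> {1..n}" for X j
  proof (cases "j \<in> X")
    case True
    then have "X \<union> ({1..n} - {j}) = {1..n}" using that by auto
    then show ?thesis using full_F F'_eq by simp
  next
    case False
    then have "X \<union> ({1..n} - {j}) = {1..n} - {j}" using that by auto
    then show ?thesis using that F'_eq CS_def by auto
  qed
  fix X Y assume X: "X \<in> F'" and Y: "Y \<in> F'"
  show "X \<union> Y \<in> F'"
  proof (cases "X \<in> F \<and> Y \<in> F")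
    case True then show ?thesis using ucF F'_eq unfolding union_closed_def by blast
  next
    case False
    then consider "\<exists>j\<in>{1..n}. X = {1..n} - {j}" | "\<exists>j\<in>{1..n}. Y = {1..n} - {j}"
      using X Y unfolding F'_eq CS_def by blast
    then show ?thesis
    proof cases
      case 1
      then obtain j where "j \<in> {1..n}" "X = {1..n} - {j}" by blast
      then show ?thesis using key[OF F'_sub[OF Y]] by (simp add: Un_commute)
    next
      case 2
      then obtain j where "j \<in> {1..n}" "Y = {1..n} - {j}" by blast
      then show ?thesis using key[OF F'_sub[OF X]] by simp
    qed
  qed
qed

lemma sep_F': "separates_points n F'"
  unfolding separates_points_def
proof (intro ballI impI)
  fix i j :: nat assume i: "i \<in> {1..n}" and j: "j \<in> {1..n}" and ij: "i \<noteq> j"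
  have "{1..n} - {i} \<in> F'" using i unfolding F'_eq CS_def by blast
  moreover have "({1..n} - {i}) \<inter> {i, j} = {j}" using i j ij by auto
  ultimately show "\<exists>A\<in>F'. card (A \<inter> {i, j}) = 1" by (intro bexI[of _ "{1..n} - {i}"]) auto
qed


lemma N1: "n \<le> (2^s+1)^(m-1)"
proof -
  have "n = m^2*s*m" using n_def k_def by simp
  also have "\<dots> \<le> m^2*m*m" using s_le by simp
  also have "\<dots> = m^4" by (simp add: power2_eq_square power4_eq_xxxx)
  also have "\<dots> \<le> m^(m-1)" using m0 by (intro power_increasing) auto
  also have "\<dots> \<le> (2^s+1)^(m-1)" using s_bounds by (intro power_mono) auto
  finally show ?thesis .
qed

lemma N2: "m * (2^s)^(m-1) \<le> card F"
proof -
  have "m = Suc (m-1)" using m0 by simp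
  then have "(2^s+1)^m \<ge> (2^s)^m + m * (2^s)^(m-1)" using pow_ineq[of "2^s" "m-1"] by metis
  then show ?thesis using cardF by simp
qed

lemma N3: "3 * real ((2^s+1)^(m-1)) \<le> 4 * real ((2^s)^(m-1))"
proof -
  define a where "a = real (2^s)"
  have a4: "a \<ge> 4 * real m" using s_bounds unfolding a_def by (metis of_nat_le_iff of_nat_mult of_nat_numeral)
  have apos: "a > 0" using a4 m0 by simp
  define x where "x = - 1 / (a+1)"
  have x1: "-1 \<le> x" using apos by (simp add: x_def field_simps)
  have "1 + real (m-1) * x \<le> (1+x)^(m-1)" by (rule Bernoulli_inequality[OF x1])
  moreover have "1 + x = a / (a+1)" using apos by (simp add: x_def field_simps)
  moreover have "real (m-1) * x \<ge> -1/4"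
  proof -
    have "real (m-1) \<le> (a+1)/4" using a4 m0 by simp
    then have "real (m-1) / (a+1) \<le> 1/4" using apos by (simp add: field_simps)
    then show ?thesis by (simp add: x_def)
  qed
  ultimately have "3/4 \<le> (a/(a+1))^(m-1)" by simp
  then have "3/4 \<le> a^(m-1) / (a+1)^(m-1)" by (simp add: power_divide)
  then have "3 * (a+1)^(m-1) \<le> 4 * a^(m-1)" using apos by (simp add: field_simps)
  then show ?thesis unfolding a_def by (simp add: add.commute)
qed

lemma N4: "card F' \<le> (2^s+2) * (2^s+1)^(m-1)"
proof -
  have "(2^s+1)^m = (2^s+1) * (2^s+1::nat)^(m-1)" using m0 by (metis Suc_diff_1 bot_nat_0.not_eq_extremum not_numeral_le_zero power_Suc)
  then have "card F \<le> (2^s+1) * (2^s+1)^(m-1)" using cardF by simp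
  then show ?thesis using cardF'_le N1 by (simp add: algebra_simps)
qed


lemma cardF'_pos: "card F' > 0" using finF' full_F F'_eq card_gt_0_iff by blast

lemma in_block: "x \<in> {1..n} \<Longrightarrow> \<exists>i\<in>{1..m}. x \<in> B i" using Bcover by blast

lemma gamma_lower: assumes x: "x \<in> {1..n}" shows "1 / (10 * real m) \<le> abundance F' x"
proof -
  obtain i where i: "i \<in> {1..m}" "x \<in> B i" using in_block[OF x] by blast
  define p where "p = real ((2^s+1)^(m-1))"
  define a where "a = real ((2::nat)^s)"
  have ppos: "p > 0" unfolding p_def using zero_less_power[of "(2::nat)^s+1" "m-1"] by linarith
  have c1: "p \<le> real (card {A\<in>F'. x \<in> A})" unfolding p_def using abund_count_lower[OF i] by (simp only: of_nat_le_iff)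
  have c2: "real (card F') \<le> (a+2) * p" using N4 unfolding a_def p_def
    by (metis (mono_tags, lifting) of_nat_add of_nat_le_iff of_nat_mult of_nat_numeral of_nat_power)
  have a8: "a \<le> 8 * real m" using s_bounds unfolding a_def by (metis of_nat_le_iff of_nat_mult of_nat_numeral)
  have a0: "a \<ge> 0" unfolding a_def by simp
  have "1 / (10 * real m) \<le> 1 / (a+2)"
    by (rule divide_left_mono) (use a8 m0 a0 in \<open>auto intro!: mult_pos_pos\<close>)
  also have "\<dots> = p / ((a+2)*p)" using ppos by simp
  also have "\<dots> \<le> real (card {A\<in>F'. x \<in> A}) / real (card F')"
    using c1 c2 ppos cardF'_pos by (intro frac_le) auto
  finally show ?thesis unfolding abundance_def .
qed

lemma gamma_upper: assumes x: "x \<in> {1..n}" and xT: "x \<notin> TT" shows "abundance F' x \<le> 3 / real m"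
proof -
  obtain i where i: "i \<in> {1..m}" "x \<in> B i" using in_block[OF x] by blast
  define p where "p = real ((2^s+1)^(m-1))"
  define q where "q = real ((2^s)^(m-1))"
  have ppos: "p > 0" unfolding p_def using zero_less_power[of "(2::nat)^s+1" "m-1"] by linarith
  have c1: "real (card {A\<in>F'. x \<in> A}) \<le> 2 * p"
    using abund_count_upper[OF i xT] N1 unfolding p_def
    by (metis (no_types, lifting) add_mono_thms_linordered_semiring(1) le_refl mult_2 of_nat_add of_nat_le_iff order_trans)
  have c2: "real m * q \<le> real (card F')" using N2 cardF'_ge unfolding q_def
    by (metis of_nat_le_iff of_nat_mult order_trans)
  have c3: "3 * p \<le> 4 * q" using N3 unfolding p_def q_def by simp
  have mpos: "real m > 0" using m0 by simp
  have "real (card {A\<in>F'. x \<in> A}) / real (card F') \<le> (2 * p) / (real m * (3/4) * p)"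
  proof (rule frac_le)
    have "(3/4)*p \<le> q" using c3 by simp
    then have "real m * ((3/4)*p) \<le> real m * q" using mpos by (intro mult_left_mono) auto
    then show "real m * (3/4) * p \<le> real (card F')" using c2 by (simp add: mult.assoc)
  qed (use c1 ppos mpos in auto)
  also have "\<dots> = 8 / (3 * real m)" using ppos mpos by (simp add: field_simps)
  also have "\<dots> \<le> 3 / real m" using mpos by (simp add: field_simps)
  finally show ?thesis unfolding abundance_def .
qed

lemma gamma_le1: "abundance F' x \<le> 1"
proof -
  have "card {A\<in>F'. x \<in> A} \<le> card F'" using finF' by (intro card_mono) auto
  then show ?thesis unfolding abundance_def using cardF'_pos by simp
qed


lemma F'_noempty: "F' - {{}} = F'" using F'_ne by blast

lemma cardTT: "card TT \<le> m * s"
proof -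
  have "card TT \<le> (\<Sum>i\<in>{1..m}. card (T i))" unfolding TT_def by (rule card_UN_le) simp
  also have "\<dots> = (\<Sum>i\<in>{1..m}. s)" using cardT by (intro sum.cong) auto
  finally show ?thesis by simp
qed

lemma AOD_lower: "1/(10*real m) \<le> AOD F'"
proof -
  define g where "g = 1/(10*real m)"
  have trm: "g \<le> (1 / real (card A)) * (\<Sum>x\<in>A. abundance F' x)" if A: "A \<in> F'" for A
  proof -
    have fin: "finite A" using F'_sub[OF A] finite_subset by blast
    have cA: "card A > 0" using F'_ne[OF A] fin by (simp add: card_gt_0_iff)
    have "real (card A) * g \<le> (\<Sum>x\<in>A. abundance F' x)"
      using gamma_lower F'_sub[OF A] unfolding g_def by (intro sum_bounded_below) auto
    then show ?thesis using cA by (simp add: field_simps)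
  qed
  have "real (card F') * g \<le> (\<Sum>A\<in>F'. (1 / real (card A)) * (\<Sum>x\<in>A. abundance F' x))"
    using trm by (intro sum_bounded_below) auto
  then have "g \<le> (1 / real (card F')) * (\<Sum>A\<in>F'. (1 / real (card A)) * (\<Sum>x\<in>A. abundance F' x))"
    using cardF'_pos by (simp add: field_simps)
  then show ?thesis unfolding AOD_def F'_noempty g_def .
qed

lemma AOD_upper: "AOD F' \<le> 4 / real m"
proof -
  define g where "g = 4 / real m"
  have mpos: "real m > 0" using m0 by simp
  have trm: "(1 / real (card A)) * (\<Sum>x\<in>A. abundance F' x) \<le> g" if A: "A \<in> F'" for A
  proof -
    have fin: "finite A" using F'_sub[OF A] finite_subset by blast
    have cA: "real (card A) \<ge> real k" using F'_big[OF A] by simp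
    have kpos: "real k > 0" using k_gt by simp
    have "(\<Sum>x\<in>A. abundance F' x) = (\<Sum>x\<in>A \<inter> TT. abundance F' x) + (\<Sum>x\<in>A - TT. abundance F' x)"
      using fin by (rule sum.Int_Diff)
    also have "(\<Sum>x\<in>A \<inter> TT. abundance F' x) \<le> real (card (A \<inter> TT)) * 1"
      using gamma_le1 by (intro sum_bounded_above) auto
    also have "(\<Sum>x\<in>A - TT. abundance F' x) \<le> real (card (A - TT)) * (3 / real m)"
      using gamma_upper F'_sub[OF A] by (intro sum_bounded_above) auto
    also have "real (card (A \<inter> TT)) * 1 \<le> real (m * s)"
    proof -
      have "card (A \<inter> TT) \<le> m * s" using cardTT card_mono[OF finTT, of "A \<inter> TT"] by simp
      then show ?thesis by (simp only: mult_1_right of_nat_le_iff)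
    qed
    also have "real (card (A - TT)) * (3 / real m) \<le> real (card A) * (3 / real m)"
      using fin mpos by (intro mult_right_mono) (auto intro: card_mono)
    finally have S: "(\<Sum>x\<in>A. abundance F' x) \<le> real (m*s) + real (card A) * (3 / real m)" by simp
    have "(1 / real (card A)) * (\<Sum>x\<in>A. abundance F' x) \<le> (1 / real (card A)) * (real (m*s) + real (card A) * (3 / real m))"
      using S cA kpos by (intro mult_left_mono) auto
    also have "\<dots> = real (m*s) / real (card A) + 3 / real m" using cA kpos by (simp add: field_simps)
    also have "real (m*s) / real (card A) \<le> real (m*s) / real k"
      using cA kpos by (intro divide_left_mono) auto
    also have "real (m*s) / real k = 1 / real m"
      using k_def mpos s_ge2 by (simp add: power2_eq_square field_simps)
    finally show ?thesis unfolding g_def by simp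
  qed
  have "(\<Sum>A\<in>F'. (1 / real (card A)) * (\<Sum>x\<in>A. abundance F' x)) \<le> real (card F') * g"
    using trm by (intro sum_bounded_above) auto
  then have "(1 / real (card F')) * (\<Sum>A\<in>F'. (1 / real (card A)) * (\<Sum>x\<in>A. abundance F' x)) \<le> g"
    using cardF'_pos by (simp add: field_simps)
  then show ?thesis unfolding AOD_def F'_noempty g_def .
qed


lemma log2pow: "log 2 (real ((2::nat)^e)) = real e"
  by (simp add: log_nat_power)

lemma L_range: "real s * real (m-1) \<le> log 2 (real (card F'))"
  "log 2 (real (card F')) \<le> (real s + 1) * real m"
proof -
  have cpos: "real (card F') > 0" using cardF'_pos by simp
  have "(2::nat)^(s*(m-1)) = (2^s)^(m-1)" by (simp add: power_mult)
  also have "\<dots> \<le> m * (2^s)^(m-1)" using m0 by simp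
  also have "\<dots> \<le> card F'" using N2 cardF'_ge by linarith
  finally have lo: "real ((2::nat)^(s*(m-1))) \<le> real (card F')" by (simp only: of_nat_le_iff)
  have "log 2 (real ((2::nat)^(s*(m-1)))) \<le> log 2 (real (card F'))"
    using lo by (intro log_mono) auto
  then show "real s * real (m-1) \<le> log 2 (real (card F'))" unfolding log2pow by simp
  have "card F' \<le> (2^s+2) * (2^s+1)^(m-1)" by (rule N4)
  also have "\<dots> \<le> (2^s*2) * (2^s*2)^(m-1)"
  proof (intro mult_le_mono power_mono)
    have "2 \<le> (2::nat)^s" using s_ge2 by (metis power_increasing power_one_right one_le_numeral le_trans one_le_numeral numeral_le_iff semiring_norm(69) less_imp_le_nat Suc_1 Suc_leD)
    then show "2^s+2 \<le> (2::nat)^s*2" "2^s+1 \<le> (2::nat)^s*2" by linarith+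
  qed simp
  also have "\<dots> = (2^s*2)^m" using m0 by (metis Suc_diff_1 bot_nat_0.not_eq_extremum not_numeral_le_zero power_Suc)
  also have "\<dots> = 2^((s+1)*m)" by (simp add: power_mult power_add)
  finally have hi: "real (card F') \<le> real ((2::nat)^((s+1)*m))" by (simp only: of_nat_le_iff)
  have "log 2 (real (card F')) \<le> log 2 (real ((2::nat)^((s+1)*m)))"
    using hi cpos by (intro log_mono) auto
  then show "log 2 (real (card F')) \<le> (real s + 1) * real m" unfolding log2pow by (simp add: algebra_simps)
qed


lemma s_real: "log 2 (real m) + 2 \<le> real s" "real s \<le> log 2 (real m) + 3"
proof -
  define x where "x = log 2 (real m)"
  have x0: "x \<ge> 0" using m0 by (simp add: x_def)
  have "real s = real_of_int \<lceil>x\<rceil> + 2" using x0 by (simp add: s_def x_def)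
  then show "log 2 (real m) + 2 \<le> real s" "real s \<le> log 2 (real m) + 3"
    using ceiling_correct[of x] unfolding x_def by linarith+
qed

lemma lm_ge: "log 2 (real m) \<ge> 4"
proof -
  have "log 2 (real m) \<ge> log 2 16" using m0 by (intro log_mono) auto
  moreover have "log 2 (16::real) = 4" using log2pow[of 4] by simp
  ultimately show ?thesis by simp
qed

lemma ratio: "1 / (2 * real m) \<le> log 2 (log 2 (real (card F'))) / log 2 (real (card F'))"
  "log 2 (log 2 (real (card F'))) / log 2 (real (card F')) \<le> 4 / real m"
proof -
  define L where "L = log 2 (real (card F'))"
  define lm where "lm = log 2 (real m)"
  have lm4: "lm \<ge> 4" using lm_ge lm_def by simp
  have mpos: "real m \<ge> 64" using m0 by simp
  have L1: "real s * real (m-1) \<le> L" "L \<le> (real s + 1) * real m" using L_range unfolding L_def by auto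
  have sr: "lm + 2 \<le> real s" "real s \<le> lm + 3" using s_real unfolding lm_def by auto
  have m1: "real (m-1) = real m - 1" using m0 by simp
  have Lm: "real m \<le> L"
  proof -
    have "real m \<le> 2 * (real m - 1)" using mpos by simp
    also have "\<dots> \<le> real s * (real m - 1)" using sr lm4 mpos by (intro mult_right_mono) auto
    finally show ?thesis using L1 m1 by simp
  qed
  have Lpos: "L > 0" using Lm mpos by simp
  have loglo: "lm \<le> log 2 L" unfolding lm_def using Lm mpos by (intro log_mono) auto
  have Lhi: "L \<le> 2 * lm * real m"
  proof -
    have "real s + 1 \<le> 2 * lm" using sr lm4 by simp
    then have "(real s + 1) * real m \<le> 2 * lm * real m" using mpos by (intro mult_right_mono) auto
    then show ?thesis using L1 by simp
  qed
  have "1 / (2 * real m) = lm / (2 * lm * real m)" using lm4 mpos by simp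
  also have "\<dots> \<le> log 2 L / L" using lm4 loglo Lpos Lhi Lm mpos by (intro frac_le) auto
  finally show "1 / (2 * real m) \<le> log 2 (log 2 (real (card F'))) / log 2 (real (card F'))"
    unfolding L_def .
  have sm: "real s + 1 \<le> real m" using s_le by (metis of_nat_1 of_nat_add of_nat_le_iff)
  have "L \<le> real m * real m" using L1 sm mpos by (meson dual_order.trans mult_right_mono of_nat_0_le_iff)
  then have "log 2 L \<le> log 2 (real m * real m)" using Lpos by (intro log_mono) auto
  also have "\<dots> = 2 * lm" unfolding lm_def using mpos by (simp add: log_mult)
  finally have loghi: "log 2 L \<le> 2 * lm" .
  have Llo: "lm * real m / 2 \<le> L"
  proof -
    have "lm * (real m / 2) \<le> real s * (real m - 1)" using sr lm4 mpos by (intro mult_mono) auto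
    then show ?thesis using L1 m1 by simp
  qed
  have lL0: "0 \<le> log 2 L" using loglo lm4 by simp
  have "log 2 L / L \<le> (2 * lm) / (lm * real m / 2)" using lL0 loghi Llo lm4 mpos by (intro frac_le) auto
  also have "\<dots> = 4 / real m" using lm4 mpos by (simp add: field_simps)
  finally show "log 2 (log 2 (real (card F'))) / log 2 (real (card F')) \<le> 4 / real m" unfolding L_def .
qed

lemma final:
  "union_closed F' \<and> separates_points n F' \<and>
   (1/40) * (log 2 (log 2 (real (card F'))) / log 2 (real (card F'))) \<le> AOD F' \<and>
   AOD F' \<le> 8 * (log 2 (log 2 (real (card F'))) / log 2 (real (card F')))"
proof (intro conjI uc_F' sep_F')
  define r where "r = log 2 (log 2 (real (card F'))) / log 2 (real (card F'))"
  have mpos: "real m > 0" using m0 by simp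
  have "(1/40) * r \<le> (1/40) * (4 / real m)" using ratio(2) unfolding r_def by simp
  also have "\<dots> = 1 / (10 * real m)" by simp
  also have "\<dots> \<le> AOD F'" by (rule AOD_lower)
  finally show "(1/40) * (log 2 (log 2 (real (card F'))) / log 2 (real (card F'))) \<le> AOD F'"
    unfolding r_def .
  have "AOD F' \<le> 4 / real m" by (rule AOD_upper)
  also have "\<dots> = 8 * (1 / (2 * real m))" by simp
  also have "\<dots> \<le> 8 * r" using ratio(1) unfolding r_def by simp
  finally show "AOD F' \<le> 8 * (log 2 (log 2 (real (card F'))) / log 2 (real (card F')))"
    unfolding r_def .
qed

end
theorem mainTheorem5:
  shows "\<exists>(c::real) (C::real) (m0::nat). c > 0 \<and> C > 0 \<and>
    (\<forall>(m::nat) (s::nat) (k::nat) (n::nat) (B::nat \<Rightarrow> nat set) (T::nat \<Rightarrow> nat set).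
       m \<ge> m0 \<longrightarrow>
       s = nat \<lceil>log 2 (real m)\<rceil> + 2 \<longrightarrow>
       k = m^2 * s \<longrightarrow>
       n = k * m \<longrightarrow>
       (\<Union>i\<in>{1..m}. B i) = {1..n} \<longrightarrow>
       (\<forall>i\<in>{1..m}. \<forall>j\<in>{1..m}. i \<noteq> j \<longrightarrow> B i \<inter> B j = {}) \<longrightarrow>
       (\<forall>i\<in>{1..m}. card (B i) = k) \<longrightarrow>
       (\<forall>i\<in>{1..m}. T i \<subseteq> B i \<and> card (T i) = s) \<longrightarrow>
       (let TT = (\<Union>i\<in>{1..m}. T i);
            F = uc_generated {B i \<union> {t} | i t. i \<in> {1..m} \<and> t \<in> TT};
            F' = F \<union> {{1..n} - {j} | j. j \<in> {1..n}};
            L = log 2 (real (card F'))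
        in union_closed F' \<and> separates_points n F' \<and>
           c * (log 2 L / L) \<le> AOD F' \<and> AOD F' \<le> C * (log 2 L / L)))"
  proof -
  have "\<forall>(m::nat) (s::nat) (k::nat) (n::nat) (B::nat \<Rightarrow> nat set) (T::nat \<Rightarrow> nat set).
       m \<ge> 64 \<longrightarrow>
       s = nat \<lceil>log 2 (real m)\<rceil> + 2 \<longrightarrow>
       k = m^2 * s \<longrightarrow>
       n = k * m \<longrightarrow>
       (\<Union>i\<in>{1..m}. B i) = {1..n} \<longrightarrow>
       (\<forall>i\<in>{1..m}. \<forall>j\<in>{1..m}. i \<noteq> j \<longrightarrow> B i \<inter> B j = {}) \<longrightarrow>
       (\<forall>i\<in>{1..m}. card (B i) = k) \<longrightarrow>
       (\<forall>i\<in>{1..m}. T i \<subseteq> B i \<and> card (T i) = s) \<longrightarrow>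
       (let TT = (\<Union>i\<in>{1..m}. T i);
            F = uc_generated {B i \<union> {t} | i t. i \<in> {1..m} \<and> t \<in> TT};
            F' = F \<union> {{1..n} - {j} | j. j \<in> {1..n}};
            L = log 2 (real (card F'))
        in union_closed F' \<and> separates_points n F' \<and>
           (1/40) * (log 2 L / L) \<le> AOD F' \<and> AOD F' \<le> 8 * (log 2 L / L))"
  proof (intro allI impI)
    fix m s k n :: nat and B T :: "nat \<Rightarrow> nat set"
    assume a: "m \<ge> 64" "s = nat \<lceil>log 2 (real m)\<rceil> + 2" "k = m^2 * s" "n = k * m"
      "(\<Union>i\<in>{1..m}. B i) = {1..n}"
      "\<forall>i\<in>{1..m}. \<forall>j\<in>{1..m}. i \<noteq> j \<longrightarrow> B i \<inter> B j = {}"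
      "\<forall>i\<in>{1..m}. card (B i) = k"
      "\<forall>i\<in>{1..m}. T i \<subseteq> B i \<and> card (T i) = s"
    interpret c: cons m s k n B T "\<Union>i\<in>{1..m}. T i"
      "uc_generated {B i \<union> {t} | i t. i \<in> {1..m} \<and> t \<in> (\<Union>i\<in>{1..m}. T i)}"
      "uc_generated {B i \<union> {t} | i t. i \<in> {1..m} \<and> t \<in> (\<Union>i\<in>{1..m}. T i)} \<union> {{1..n} - {j} | j. j \<in> {1..n}}"
      using a by unfold_locales auto
    show "let TT = (\<Union>i\<in>{1..m}. T i);
            F = uc_generated {B i \<union> {t} | i t. i \<in> {1..m} \<and> t \<in> TT};
            F' = F \<union> {{1..n} - {j} | j. j \<in> {1..n}};
            L = log 2 (real (card F'))
        in union_closed F' \<and> separates_points n F' \<and>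
           (1/40) * (log 2 L / L) \<le> AOD F' \<and> AOD F' \<le> 8 * (log 2 L / L)"
      unfolding Let_def by (rule c.final)
  qed
  then show ?thesis by (intro exI[of _ "1/40"] exI[of _ "8::real"] exI[of _ "64::nat"]) simp
qed

end
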